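(* Let $$y=\frac{(2s^2-1)(3s-1)}{2s(2s^2+2s-1)(s-1)},\qquad t=-\frac{(3s-1)^2}{8(2s^2+2s-1)(s-1)s^3}.$$ Then $y(t)$ is a solution of $\mathrm{P}_{\mathrm{VI}}$ with parameters $(\theta_1,\theta_2,\theta_3,\theta_4)=(1/3,3/4,1/3,3/4)$.
   Context: $\mathrm{P}_{\mathrm{VI}}$ is the equation $$\frac{d^2y}{dt^2}=\frac12\Big(\frac1y+\frac1{y-1}+\frac1{y-t}\Big)\Big(\frac{dy}{dt}\Big)^2-\Big(\frac1t+\frac1{t-1}+\frac1{y-t}\Big)\frac{dy}{dt}+\frac{y(y-1)(y-t)}{t^2(t-1)^2}\Big(\alpha+\beta\frac{t}{y^2}+\gamma\frac{t-1}{(y-1)^2}+\delta\frac{t(t-1)}{(y-t)^2}\Big),$$ with $\alpha=(\theta_4-1)^2/2$, $\beta=-\theta_1^2/2$, $\gamma=\theta_3^2/2$, $\delta=(1-\theta_2^2)/2$. When $y,t$ are given as rational functions of a parameter on a curve, derivatives with respect to $t$ are computed via the chain rule. *)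

theory Defs
  imports "HOL-Analysis.Analysis"
begin

definition PVI_alpha :: "complex \<Rightarrow> complex" where "PVI_alpha th4 = (th4 - 1)^2 / 2"
definition PVI_beta :: "complex \<Rightarrow> complex" where "PVI_beta th1 = - (th1^2) / 2"
definition PVI_gamma :: "complex \<Rightarrow> complex" where "PVI_gamma th3 = th3^2 / 2"
definition PVI_delta :: "complex \<Rightarrow> complex" where "PVI_delta th2 = (1 - th2^2) / 2"

definition PVI_rhs ::
  "complex \<Rightarrow> complex \<Rightarrow> complex \<Rightarrow> complex \<Rightarrow> complex \<Rightarrow> complex \<Rightarrow> complex \<Rightarrow> complex" where
  "PVI_rhs th1 th2 th3 th4 t y y1 =
     (1/2) * (1/y + 1/(y - 1) + 1/(y - t)) * y1^2
     - (1/t + 1/(t - 1) + 1/(y - t)) * y1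
     + (y * (y - 1) * (y - t)) / (t^2 * (t - 1)^2) *
       (PVI_alpha th4 + PVI_beta th1 * t / y^2 + PVI_gamma th3 * (t - 1) / (y - 1)^2
        + PVI_delta th2 * t * (t - 1) / (y - t)^2)"

text \<open>Derivatives with respect to t along a parametrised curve s \<mapsto> (T s, Y s), via the chain rule.\<close>
definition dY_dT :: "(complex \<Rightarrow> complex) \<Rightarrow> (complex \<Rightarrow> complex) \<Rightarrow> complex \<Rightarrow> complex" where
  "dY_dT Y T s = deriv Y s / deriv T s"

definition d2Y_dT2 :: "(complex \<Rightarrow> complex) \<Rightarrow> (complex \<Rightarrow> complex) \<Rightarrow> complex \<Rightarrow> complex" where
  "d2Y_dT2 Y T s = deriv (dY_dT Y T) s / deriv T s"

definition yfun :: "complex \<Rightarrow> complex" where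
  "yfun s = ((2 * s ^ 2 - 1) * (3 * s - 1)) / (2 * s*(2 * s ^ 2 + 2 * s - 1)*(s - 1))"

definition tfun :: "complex \<Rightarrow> complex" where
  "tfun s = - ((3 * s - 1)^2) / (8*(2 * s ^ 2 + 2 * s - 1)*(s - 1) * s ^ 3)"

end

theory Submission
  imports Defs
begin

definition TD :: "complex \<Rightarrow> complex" where
  "TD z = 3 * (3 * z - 1) * (2 * z - 1)^3 * (z + 1) / (8 * z^4 * (z - 1)^2 * (2 * z^2 + 2 * z - 1)^2)"

definition YD :: "complex \<Rightarrow> complex" where
  "YD z = (0 - 12 * z^6 + 8 * z^5 + 4 * z^3 - 11 * z^2 + 6 * z - 1) / (2 * z^2 * (z - 1)^2 * (2 * z^2 + 2 * z - 1)^2)"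

definition Y1F :: "complex \<Rightarrow> complex" where
  "Y1F z = 4 * z^2 * (0 - 12 * z^6 + 8 * z^5 + 4 * z^3 - 11 * z^2 + 6 * z - 1) / (3 * (3 * z - 1) * (2 * z - 1)^3 * (z + 1))"

definition Y1D :: "complex \<Rightarrow> complex" where
  "Y1D z = 8 * z * (z - 1) * (2 * z^2 + 2 * z - 1) * (0 - 54 * z^6 + 30 * z^5 - 15 * z^4 + 8 * z^3 - 12 * z^2 + 6 * z - 1) / (3 * (3 * z - 1)^2 * (2 * z - 1)^4 * (z + 1)^2)"

definition Y2F :: "complex \<Rightarrow> complex" where
  "Y2F z = 64 * z^5 * (z - 1)^3 * (2 * z^2 + 2 * z - 1)^3 * (0 - 54 * z^6 + 30 * z^5 - 15 * z^4 + 8 * z^3 - 12 * z^2 + 6 * z - 1) / (9 * (3 * z - 1)^3 * (2 * z - 1)^7 * (z + 1)^3)"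

lemma t_eq_aux:
  fixes z a1 q a3 a2 a4 :: complex
  assumes nz: "z \<noteq> 0" "a1 \<noteq> 0" "q \<noteq> 0"
    and d: "a1 = z - 1" "q = 2 * z^2 + 2 * z - 1" "a3 = 3 * z - 1" "a2 = 2 * z - 1" "a4 = z + 1"
  shows "((- 6) * a3 * (8 * q * a1 * z ^ 3) - (- (a3^2)) * (96 * z^5 - 96 * z^3 + 24 * z^2))
           / ((8 * q * a1 * z ^ 3) * (8 * q * a1 * z ^ 3))
         = 3 * a3 * a2^3 * a4 / (8 * z^4 * a1^2 * q^2)"
  using nz apply (simp add: field_simps)
  unfolding d by algebra

lemma t_der:
  fixes z :: complex
  assumes "z \<noteq> 0" "z - 1 \<noteq> 0" "2 * z^2 + 2 * z - 1 \<noteq> 0"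
  shows "(tfun has_field_derivative TD z) (at z)"
proof -
  have dF: "((\<lambda>z. - ((3 * z - 1)^2)) has_field_derivative ((- 6) * (3 * z - 1))) (at z)"
    by (rule derivative_eq_intros refl)+ (simp add: eval_nat_numeral; algebra)
  have dG: "((\<lambda>z. 8 * (2 * z ^ 2 + 2 * z - 1) * (z - 1) * z ^ 3) has_field_derivative
      (96 * z^5 - 96 * z^3 + 24 * z^2)) (at z)"
    by (rule derivative_eq_intros refl)+ (simp add: eval_nat_numeral; algebra)
  have G0: "8 * (2 * z ^ 2 + 2 * z - 1) * (z - 1) * z ^ 3 \<noteq> 0"
    using assms by (intro no_zero_divisors power_not_zero) simp_all
  have D: "(tfun has_field_derivative
      (((- 6) * (3 * z - 1) * (8 * (2 * z ^ 2 + 2 * z - 1) * (z - 1) * z ^ 3)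
        - (- ((3 * z - 1)^2)) * (96 * z^5 - 96 * z^3 + 24 * z^2))
       / ((8 * (2 * z ^ 2 + 2 * z - 1) * (z - 1) * z ^ 3) * (8 * (2 * z ^ 2 + 2 * z - 1) * (z - 1) * z ^ 3)))) (at z)"
    unfolding tfun_def[abs_def] by (rule DERIV_divide[OF dF dG G0])
  have e: "((- 6) * (3 * z - 1) * (8 * (2 * z ^ 2 + 2 * z - 1) * (z - 1) * z ^ 3)
        - (- ((3 * z - 1)^2)) * (96 * z^5 - 96 * z^3 + 24 * z^2))
       / ((8 * (2 * z ^ 2 + 2 * z - 1) * (z - 1) * z ^ 3) * (8 * (2 * z ^ 2 + 2 * z - 1) * (z - 1) * z ^ 3))
      = TD z"
    unfolding TD_def
    by (rule t_eq_aux[of z "z - 1" "2 * z ^ 2 + 2 * z - 1" "3 * z - 1" "2 * z - 1" "z + 1"])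
       (use assms in simp_all)
  show ?thesis using D unfolding e .
qed

lemma y_eq_aux:
  fixes z a1 q a3 b1 :: complex
  assumes nz: "z \<noteq> 0" "a1 \<noteq> 0" "q \<noteq> 0"
    and d: "a1 = z - 1" "q = 2 * z^2 + 2 * z - 1" "a3 = 3 * z - 1" "b1 = 2 * z^2 - 1"
  shows "((18 * z^2 - 4 * z - 3) * (2 * z * q * a1) - (b1 * a3) * (16 * z^3 - 12 * z + 2))
           / ((2 * z * q * a1) * (2 * z * q * a1))
         = (0 - 12 * z^6 + 8 * z^5 + 4 * z^3 - 11 * z^2 + 6 * z - 1) / (2 * z^2 * a1^2 * q^2)"
  using nz apply (simp add: field_simps)
  unfolding d by algebra

lemma y_der:
  fixes z :: complex
  assumes "z \<noteq> 0" "z - 1 \<noteq> 0" "2 * z^2 + 2 * z - 1 \<noteq> 0"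
  shows "(yfun has_field_derivative YD z) (at z)"
proof -
  have dF: "((\<lambda>z. (2 * z ^ 2 - 1) * (3 * z - 1)) has_field_derivative (18 * z^2 - 4 * z - 3)) (at z)"
    by (rule derivative_eq_intros refl)+ (simp add: eval_nat_numeral; algebra)
  have dG: "((\<lambda>z. 2 * z * (2 * z ^ 2 + 2 * z - 1) * (z - 1)) has_field_derivative
      (16 * z^3 - 12 * z + 2)) (at z)"
    by (rule derivative_eq_intros refl)+ (simp add: eval_nat_numeral; algebra)
  have G0: "2 * z * (2 * z ^ 2 + 2 * z - 1) * (z - 1) \<noteq> 0"
    using assms by (intro no_zero_divisors) simp_all
  have D: "(yfun has_field_derivative
      (((18 * z^2 - 4 * z - 3) * (2 * z * (2 * z ^ 2 + 2 * z - 1) * (z - 1))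
        - ((2 * z ^ 2 - 1) * (3 * z - 1)) * (16 * z^3 - 12 * z + 2))
       / ((2 * z * (2 * z ^ 2 + 2 * z - 1) * (z - 1)) * (2 * z * (2 * z ^ 2 + 2 * z - 1) * (z - 1))))) (at z)"
    unfolding yfun_def[abs_def] by (rule DERIV_divide[OF dF dG G0])
  have e: "((18 * z^2 - 4 * z - 3) * (2 * z * (2 * z ^ 2 + 2 * z - 1) * (z - 1))
        - ((2 * z ^ 2 - 1) * (3 * z - 1)) * (16 * z^3 - 12 * z + 2))
       / ((2 * z * (2 * z ^ 2 + 2 * z - 1) * (z - 1)) * (2 * z * (2 * z ^ 2 + 2 * z - 1) * (z - 1)))
      = YD z"
    unfolding YD_def
    by (rule y_eq_aux[of z "z - 1" "2 * z ^ 2 + 2 * z - 1" "3 * z - 1" "2 * z ^ 2 - 1"])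
       (use assms in simp_all)
  show ?thesis using D unfolding e .
qed

lemma y1_eq_aux:
  fixes z a1 q a3 a2 a4 n2 K :: complex
  assumes nz: "a3 \<noteq> 0" "a2 \<noteq> 0" "a4 \<noteq> 0"
    and d: "a1 = z - 1" "q = 2 * z^2 + 2 * z - 1" "a3 = 3 * z - 1" "a2 = 2 * z - 1" "a4 = z + 1"
      "n2 = 0 - 12 * z^6 + 8 * z^5 + 4 * z^3 - 11 * z^2 + 6 * z - 1"
      "K = 0 - 54 * z^6 + 30 * z^5 - 15 * z^4 + 8 * z^3 - 12 * z^2 + 6 * z - 1"
  shows "((0 - 384 * z^7 + 224 * z^6 + 80 * z^4 - 176 * z^3 + 72 * z^2 - 8 * z) * (3 * a3 * a2^3 * a4)
          - (4 * z^2 * n2) * (360 * z^4 - 240 * z^3 - 126 * z^2 + 126 * z - 24))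
           / ((3 * a3 * a2^3 * a4) * (3 * a3 * a2^3 * a4))
         = 8 * z * a1 * q * K / (3 * a3^2 * a2^4 * a4^2)"
  using nz apply (simp add: field_simps)
  unfolding d by algebra

lemma y1_der:
  fixes z :: complex
  assumes "3 * z - 1 \<noteq> 0" "2 * z - 1 \<noteq> 0" "z + 1 \<noteq> 0"
  shows "(Y1F has_field_derivative Y1D z) (at z)"
proof -
  have dF: "((\<lambda>z. 4 * z^2 * (0 - 12 * z^6 + 8 * z^5 + 4 * z^3 - 11 * z^2 + 6 * z - 1)) has_field_derivative
      (0 - 384 * z^7 + 224 * z^6 + 80 * z^4 - 176 * z^3 + 72 * z^2 - 8 * z)) (at z)"
    by (rule derivative_eq_intros refl)+ (simp add: eval_nat_numeral; algebra)
  have dG: "((\<lambda>z. 3 * (3 * z - 1) * (2 * z - 1)^3 * (z + 1)) has_field_derivative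
      (360 * z^4 - 240 * z^3 - 126 * z^2 + 126 * z - 24)) (at z)"
    by (rule derivative_eq_intros refl)+ (simp add: eval_nat_numeral; algebra)
  have G0: "3 * (3 * z - 1) * (2 * z - 1)^3 * (z + 1) \<noteq> 0"
    using assms by (intro no_zero_divisors power_not_zero) simp_all
  have D: "(Y1F has_field_derivative
      (((0 - 384 * z^7 + 224 * z^6 + 80 * z^4 - 176 * z^3 + 72 * z^2 - 8 * z) * (3 * (3 * z - 1) * (2 * z - 1)^3 * (z + 1))
        - (4 * z^2 * (0 - 12 * z^6 + 8 * z^5 + 4 * z^3 - 11 * z^2 + 6 * z - 1)) * (360 * z^4 - 240 * z^3 - 126 * z^2 + 126 * z - 24))
       / ((3 * (3 * z - 1) * (2 * z - 1)^3 * (z + 1)) * (3 * (3 * z - 1) * (2 * z - 1)^3 * (z + 1))))) (at z)"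
    unfolding Y1F_def[abs_def] by (rule DERIV_divide[OF dF dG G0])
  have e: "((0 - 384 * z^7 + 224 * z^6 + 80 * z^4 - 176 * z^3 + 72 * z^2 - 8 * z) * (3 * (3 * z - 1) * (2 * z - 1)^3 * (z + 1))
        - (4 * z^2 * (0 - 12 * z^6 + 8 * z^5 + 4 * z^3 - 11 * z^2 + 6 * z - 1)) * (360 * z^4 - 240 * z^3 - 126 * z^2 + 126 * z - 24))
       / ((3 * (3 * z - 1) * (2 * z - 1)^3 * (z + 1)) * (3 * (3 * z - 1) * (2 * z - 1)^3 * (z + 1)))
      = Y1D z"
    unfolding Y1D_def
    by (rule y1_eq_aux[of "3 * z - 1" "2 * z - 1" "z + 1" "z - 1" z "2 * z^2 + 2 * z - 1"
          "0 - 12 * z^6 + 8 * z^5 + 4 * z^3 - 11 * z^2 + 6 * z - 1"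
          "0 - 54 * z^6 + 30 * z^5 - 15 * z^4 + 8 * z^3 - 12 * z^2 + 6 * z - 1"])
       (use assms in simp_all)
  show ?thesis using D unfolding e .
qed

lemma quot1_aux:
  fixes z a1 q a3 a2 a4 n2 :: complex
  assumes nz: "z \<noteq> 0" "a1 \<noteq> 0" "q \<noteq> 0" "a3 \<noteq> 0" "a2 \<noteq> 0" "a4 \<noteq> 0"
  shows "(n2 / (2 * z^2 * a1^2 * q^2)) / (3 * a3 * a2^3 * a4 / (8 * z^4 * a1^2 * q^2))
       = 4 * z^2 * n2 / (3 * a3 * a2^3 * a4)"
  using nz by (simp add: field_simps)

lemma quot1:
  fixes z :: complex
  assumes "z \<noteq> 0" "z - 1 \<noteq> 0" "2 * z^2 + 2 * z - 1 \<noteq> 0" "3 * z - 1 \<noteq> 0" "2 * z - 1 \<noteq> 0" "z + 1 \<noteq> 0"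
  shows "YD z / TD z = Y1F z"
  unfolding YD_def TD_def Y1F_def
  by (rule quot1_aux) (use assms in simp_all)

lemma quot2_aux:
  fixes z a1 q a3 a2 a4 K :: complex
  assumes nz: "z \<noteq> 0" "a1 \<noteq> 0" "q \<noteq> 0" "a3 \<noteq> 0" "a2 \<noteq> 0" "a4 \<noteq> 0"
  shows "(8 * z * a1 * q * K / (3 * a3^2 * a2^4 * a4^2)) / (3 * a3 * a2^3 * a4 / (8 * z^4 * a1^2 * q^2))
       = 64 * z^5 * a1^3 * q^3 * K / (9 * a3^3 * a2^7 * a4^3)"
  using nz by (simp add: field_simps eval_nat_numeral)

lemma quot2:
  fixes z :: complex
  assumes "z \<noteq> 0" "z - 1 \<noteq> 0" "2 * z^2 + 2 * z - 1 \<noteq> 0" "3 * z - 1 \<noteq> 0" "2 * z - 1 \<noteq> 0" "z + 1 \<noteq> 0"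
  shows "Y1D z / TD z = Y2F z"
  unfolding Y1D_def TD_def Y2F_def
  by (rule quot2_aux) (use assms in simp_all)

lemma fin_aux:
  fixes s a1 q a3 a2 a4 b1 r1 r2 n2 K :: complex
  assumes nz: "s \<noteq> 0" "a1 \<noteq> 0" "q \<noteq> 0" "a3 \<noteq> 0" "a2 \<noteq> 0" "a4 \<noteq> 0" "b1 \<noteq> 0" "r1 \<noteq> 0" "r2 \<noteq> 0"
    and d: "a1 = s - 1" "q = 2 * s^2 + 2 * s - 1" "a3 = 3 * s - 1" "a2 = 2 * s - 1" "a4 = s + 1"
      "b1 = 2 * s^2 - 1" "r1 = 2 * s^2 - 4 * s + 1" "r2 = 4 * s^2 - 2 * s + 1"
      "n2 = 0 - 12 * s^6 + 8 * s^5 + 4 * s^3 - 11 * s^2 + 6 * s - 1"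
      "K = 0 - 54 * s^6 + 30 * s^5 - 15 * s^4 + 8 * s^3 - 12 * s^2 + 6 * s - 1"
  shows "64 * s^5 * a1^3 * q^3 * K / (9 * a3^3 * a2^7 * a4^3)
       = PVI_rhs (1/3) (3/4) (1/3) (3/4) (- (a3^2) / (8 * q * a1 * s^3)) ((b1 * a3) / (2 * s * q * a1))
           (4 * s^2 * n2 / (3 * a3 * a2^3 * a4))"
proof -
  define t where "t = - (a3^2) / (8 * q * a1 * s^3)"
  define y where "y = (b1 * a3) / (2 * s * q * a1)"
  define y1 where "y1 = 4 * s^2 * n2 / (3 * a3 * a2^3 * a4)"
  define NA where "NA = a2 * a4 * r1 * r2 - a3 * b1 * r2 + 4 * s^2 * b1 * r1"
  define NB where "NB = - (a2^4 * a4^2 * r2) - a3^2 * r2 + a3 * a2^3 * a4"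
  define ND where "ND = 18 * s * b1^2 * r1^2 * r2^2 + 16 * a1 * q * r1^2 * r2^2
      - 16 * a2^2 * a1 * q * b1^2 * r2^2 + 126 * s * a2^2 * b1^2 * r1^2"
  have P1: "a3 * b1 - 2 * s * a1 * q = - (a2 * a4 * r1)" unfolding d by algebra
  have P2: "- (a3^2) - 8 * s^3 * a1 * q = - (a2^4 * a4^2)" unfolding d by algebra
  have P3: "4 * s^2 * a3 * b1 + a3^2 = a3 * a2 * a4 * r2" unfolding d by algebra
  have PF: "16 * NA * n2^2 - 96 * NB * n2 * b1 * r1 - 2 * s * a3 * a2 * a4 * ND
      = 64 * a1^2 * q^2 * K * b1 * r1 * r2"
    unfolding NA_def NB_def ND_def d by algebra
  have ey1: "y - 1 = - (a2 * a4 * r1) / (2 * s * a1 * q)"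
  proof -
    have "y - 1 = (a3 * b1 - 2 * s * a1 * q) / (2 * s * a1 * q)"
      unfolding y_def using nz by (simp add: field_simps eval_nat_numeral)
    then show ?thesis unfolding P1 .
  qed
  have et1: "t - 1 = - (a2^4 * a4^2) / (8 * s^3 * a1 * q)"
  proof -
    have "t - 1 = (- (a3^2) - 8 * s^3 * a1 * q) / (8 * s^3 * a1 * q)"
      unfolding t_def using nz by (simp add: field_simps eval_nat_numeral)
    then show ?thesis unfolding P2 .
  qed
  have eyt: "y - t = a3 * a2 * a4 * r2 / (8 * s^3 * a1 * q)"
  proof -
    have "y - t = (4 * s^2 * a3 * b1 + a3^2) / (8 * s^3 * a1 * q)"
      unfolding t_def y_def using nz by (simp add: field_simps eval_nat_numeral)
    then show ?thesis unfolding P3 .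
  qed
  have A: "1 / y + 1 / (y - 1) + 1 / (y - t) = 2 * s * a1 * q * NA / (a3 * a2 * a4 * b1 * r1 * r2)"
    unfolding ey1 eyt unfolding y_def NA_def using nz by (simp add: field_simps eval_nat_numeral)
  have B: "1 / t + 1 / (t - 1) + 1 / (y - t) = 8 * s^3 * a1 * q * NB / (a3^2 * a2^4 * a4^2 * r2)"
    unfolding et1 eyt unfolding t_def NB_def using nz by (simp add: field_simps eval_nat_numeral)
  have C: "(y * (y - 1) * (y - t)) / (t^2 * (t - 1)^2)
      = - 128 * s^7 * a1 * q * b1 * r1 * r2 / (a3^2 * a2^6 * a4^2)"
    unfolding ey1 eyt et1 unfolding y_def t_def using nz by (simp add: field_simps eval_nat_numeral)
  have D: "PVI_alpha (3/4) + PVI_beta (1/3) * t / y^2 + PVI_gamma (1/3) * (t - 1) / (y - 1)^2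
      + PVI_delta (3/4) * t * (t - 1) / (y - t)^2 = ND / (576 * s * b1^2 * r1^2 * r2^2)"
    unfolding ey1 eyt et1 unfolding y_def t_def ND_def PVI_alpha_def PVI_beta_def PVI_gamma_def PVI_delta_def
    using nz by (simp add: field_simps eval_nat_numeral)
  have S1: "(1/2) * (2 * s * a1 * q * NA / (a3 * a2 * a4 * b1 * r1 * r2)) * y1^2
      - (8 * s^3 * a1 * q * NB / (a3^2 * a2^4 * a4^2 * r2)) * y1
      + (- 128 * s^7 * a1 * q * b1 * r1 * r2 / (a3^2 * a2^6 * a4^2)) * (ND / (576 * s * b1^2 * r1^2 * r2^2))
      = s^5 * a1 * q * (16 * NA * n2^2 - 96 * NB * n2 * b1 * r1 - 2 * s * a3 * a2 * a4 * ND)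
         / (9 * a3^3 * a2^7 * a4^3 * b1 * r1 * r2)"
    unfolding y1_def using nz by (simp add: field_simps eval_nat_numeral)
  have S2: "s^5 * a1 * q * (64 * a1^2 * q^2 * K * b1 * r1 * r2) / (9 * a3^3 * a2^7 * a4^3 * b1 * r1 * r2)
      = 64 * s^5 * a1^3 * q^3 * K / (9 * a3^3 * a2^7 * a4^3)"
    using nz by (simp add: field_simps eval_nat_numeral)
  have "64 * s^5 * a1^3 * q^3 * K / (9 * a3^3 * a2^7 * a4^3) = PVI_rhs (1/3) (3/4) (1/3) (3/4) t y y1"
    unfolding PVI_rhs_def A B C D S1 PF S2 ..
  then show ?thesis unfolding t_def y_def y1_def .
qed

lemma ym1_aux:
  fixes s a1 q a3 a2 a4 b1 r1 :: complex
  assumes nz: "s \<noteq> 0" "a1 \<noteq> 0" "q \<noteq> 0"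
    and d: "a1 = s - 1" "q = 2 * s^2 + 2 * s - 1" "a3 = 3 * s - 1" "a2 = 2 * s - 1" "a4 = s + 1"
      "b1 = 2 * s^2 - 1" "r1 = 2 * s^2 - 4 * s + 1"
  shows "(b1 * a3) / (2 * s * q * a1) - 1 = r1 * (- (a2 * a4) / (2 * s * q * a1))"
  using nz apply (simp add: field_simps)
  unfolding d by algebra

lemma ymt_aux:
  fixes s a1 q a3 a2 a4 b1 r2 :: complex
  assumes nz: "s \<noteq> 0" "a1 \<noteq> 0" "q \<noteq> 0"
    and d: "a1 = s - 1" "q = 2 * s^2 + 2 * s - 1" "a3 = 3 * s - 1" "a2 = 2 * s - 1" "a4 = s + 1"
      "b1 = 2 * s^2 - 1" "r2 = 4 * s^2 - 2 * s + 1"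
  shows "(b1 * a3) / (2 * s * q * a1) - (- (a3^2) / (8 * q * a1 * s ^ 3))
     = r2 * (a3 * a2 * a4 / (8 * s^3 * a1 * q))"
  using nz apply (simp add: field_simps)
  unfolding d by algebra

theorem mainTheorem7:
  fixes s :: complex
  assumes "s \<noteq> 0" and "s \<noteq> 1" and "2 * s ^ 2 + 2 * s - 1 \<noteq> 0"
    and "deriv tfun s \<noteq> 0"
    and "tfun s \<noteq> 0" and "tfun s \<noteq> 1"
    and "yfun s \<noteq> 0" and "yfun s \<noteq> 1" and "yfun s \<noteq> tfun s"
  shows "d2Y_dT2 yfun tfun s =
         PVI_rhs (1/3) (3/4) (1/3) (3/4) (tfun s) (yfun s) (dY_dT yfun tfun s)"
proof -
  have s0: "s \<noteq> 0" using assms(1) .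
  have s1: "s - 1 \<noteq> 0" using assms(2) by simp
  have q0: "2 * s^2 + 2 * s - 1 \<noteq> 0" using assms(3) .
  have TDs: "deriv tfun s = TD s" by (rule DERIV_imp_deriv[OF t_der[OF s0 s1 q0]])
  have TDnz: "TD s \<noteq> 0" using assms(4) TDs by simp
  have a3: "3 * s - 1 \<noteq> 0"
  proof
    assume "3 * s - 1 = 0"
    then have "TD s = 0" unfolding TD_def by simp
    with TDnz show False by simp
  qed
  have a2: "2 * s - 1 \<noteq> 0"
  proof
    assume "2 * s - 1 = 0"
    then have "TD s = 0" unfolding TD_def by simp
    with TDnz show False by simp
  qed
  have a4: "s + 1 \<noteq> 0"
  proof
    assume "s + 1 = 0"
    then have "TD s = 0" unfolding TD_def by simp
    with TDnz show False by simp
  qed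
  have b1: "2 * s^2 - 1 \<noteq> 0"
  proof
    assume "2 * s^2 - 1 = 0"
    then have "yfun s = 0" unfolding yfun_def by simp
    with assms(7) show False by simp
  qed
  have ym1: "yfun s - 1 = (2 * s^2 - 4 * s + 1) * (- ((2 * s - 1) * (s + 1)) / (2 * s * (2 * s ^ 2 + 2 * s - 1) * (s - 1)))"
    unfolding yfun_def
    by (rule ym1_aux[of s "s - 1" "2 * s ^ 2 + 2 * s - 1" "3 * s - 1" "2 * s - 1" "s + 1" "2 * s ^ 2 - 1" "2 * s^2 - 4 * s + 1"])
       (use s0 s1 q0 in simp_all)
  have r1: "2 * s^2 - 4 * s + 1 \<noteq> 0"
  proof
    assume r: "2 * s^2 - 4 * s + 1 = 0"
    have "yfun s - 1 = 0" using ym1 unfolding r by simp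
    with assms(8) show False by simp
  qed
  have ymt: "yfun s - tfun s = (4 * s^2 - 2 * s + 1) * ((3 * s - 1) * (2 * s - 1) * (s + 1) / (8 * s^3 * (s - 1) * (2 * s ^ 2 + 2 * s - 1)))"
    unfolding yfun_def tfun_def
    by (rule ymt_aux[of s "s - 1" "2 * s ^ 2 + 2 * s - 1" "3 * s - 1" "2 * s - 1" "s + 1" "2 * s ^ 2 - 1" "4 * s^2 - 2 * s + 1"])
       (use s0 s1 q0 in simp_all)
  have r2: "4 * s^2 - 2 * s + 1 \<noteq> 0"
  proof
    assume r: "4 * s^2 - 2 * s + 1 = 0"
    have "yfun s - tfun s = 0" using ymt unfolding r by simp
    with assms(9) show False by simp
  qed
  define S where "S = {z::complex. z \<noteq> 0 \<and> z - 1 \<noteq> 0 \<and> 2 * z^2 + 2 * z - 1 \<noteq> 0 \<and>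
      3 * z - 1 \<noteq> 0 \<and> 2 * z - 1 \<noteq> 0 \<and> z + 1 \<noteq> 0}"
  have oS: "open S" unfolding S_def
    by (intro open_Collect_conj open_Collect_neq continuous_intros)
  have sS: "s \<in> S" unfolding S_def mem_Collect_eq using s0 s1 q0 a3 a2 a4 by blast
  have eqS: "Y1F z = dY_dT yfun tfun z" if zS: "z \<in> S" for z
  proof -
    have h: "z \<noteq> 0" "z - 1 \<noteq> 0" "2 * z^2 + 2 * z - 1 \<noteq> 0" "3 * z - 1 \<noteq> 0" "2 * z - 1 \<noteq> 0" "z + 1 \<noteq> 0"
      using zS unfolding S_def mem_Collect_eq by blast+
    have "dY_dT yfun tfun z = YD z / TD z"
      unfolding dY_dT_def using DERIV_imp_deriv[OF y_der[OF h(1-3)]] DERIV_imp_deriv[OF t_der[OF h(1-3)]]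
      by simp
    also have "\<dots> = Y1F z" by (rule quot1[OF h])
    finally show ?thesis by simp
  qed
  have "(dY_dT yfun tfun has_field_derivative Y1D s) (at s)"
    by (rule has_field_derivative_transform_within_open[OF y1_der[OF a3 a2 a4] oS sS eqS])
  then have dd: "deriv (dY_dT yfun tfun) s = Y1D s" by (rule DERIV_imp_deriv)
  have l: "d2Y_dT2 yfun tfun s = Y2F s"
    unfolding d2Y_dT2_def dd TDs by (rule quot2[OF s0 s1 q0 a3 a2 a4])
  have m: "dY_dT yfun tfun s = Y1F s" using eqS[OF sS] by simp
  show ?thesis
    unfolding l m unfolding Y2F_def Y1F_def tfun_def yfun_def
    by (rule fin_aux[of s "s - 1" "2 * s ^ 2 + 2 * s - 1" "3 * s - 1" "2 * s - 1" "s + 1" "2 * s ^ 2 - 1"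
          "2 * s^2 - 4 * s + 1" "4 * s^2 - 2 * s + 1"
          "0 - 12 * s^6 + 8 * s^5 + 4 * s^3 - 11 * s^2 + 6 * s - 1"
          "0 - 54 * s^6 + 30 * s^5 - 15 * s^4 + 8 * s^3 - 12 * s^2 + 6 * s - 1"])
       (use s0 s1 q0 a3 a2 a4 b1 r1 r2 in simp_all)
qed

end
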